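(* Consider the sampling phase of the algorithm SampLayer on an undirected graph $G$, with layers $L_0, L_1, L_2, L_{\geq 2}$, reachability scores $rs(\cdot)$ and baseline reachability $rs_0$ as in the context, after preprocessing has been completed (so $L_0$, $L_1$ and an estimate of $|L_{\geq 2}|$ are known, and uniformly random edges between $L_0$ and $L_1$ can be sampled without queries). Assume: (i) every $v \in L_2$ satisfies $rs_0 \le rs(v) \le c\cdot rs_0$ for some $c > 1$; (ii) $\alpha$ is the fraction of edges $e$ between $L_0$ and $L_1$ whose $L_1$-endpoint has at least one neighbor in $L_2$; (iii) $w = \mathbb{E}[|C(v)|]$, where $v \in L_{\geq 2}$ is distributed as the output of a single run of the procedure Reach and $C(v)$ is the component of $G_{\geq 2}$ containing $v$; (iv) for every component $C$ of $G_{\geq 2}$, the number of edges between $C$ and the rest of $G$ is at most $d\cdot|C|$ for an integer $d$. Then the expected number of queries made by SampLayer to sample a single node is $O\!\left(c\left(\frac{1}{\alpha} + w d\right)\right)$.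
   Context: The graph is undirected and accessed via node queries: querying a node reveals its neighbors. Layers: $L_0 \subseteq V$ is a set of already-queried nodes computed in preprocessing; $L_1 = \bigcup_{v\in L_0} N(v)\setminus L_0$; $L_2$ is the set of nodes at distance exactly $2$ from $L_0$; $L_{\geq 2} = V\setminus(L_0\cup L_1)$. $G_{\geq 2}$ is the graph on $L_{\geq 2}$ containing the edges of $G$ between $L_2$ and $L_{\geq 2}\setminus L_2$ and those with both endpoints in $L_{\geq 2}\setminus L_2$. Let $d^+(L_0)$ be the number of edges between $L_0$ and $L_1$. A reaching attempt: pick a uniformly random edge between $L_0$ and $L_1$ (no query), let $u$ be its $L_1$-endpoint, query $u$; if $u$ has no neighbor in $L_2$ the attempt fails; otherwise pick a random neighbor $v\in L_2$ of $u$, explore the component $C(v)$ of $G_{\geq 2}$ by BFS (querying its nodes), pick a uniformly random $w\in C(v)$ and compute its reachability score. The reachability score $rs(v)$ of $v\in L_{\geq 2}$ is the value such that a single attempt outputs $v$ with probability $rs(v)/d^+(L_0)$. Reach repeats attempts until one succeeds and returns the output node. Sampling phase (SampLayer's Sample): with $\bar n = |L_0|+|L_1|+\bar\ell_{\geq 2}$ ($\bar\ell_{\geq 2}$ the estimate of $|L_{\geq 2}|$), output a uniform node of $L_0$ with probability $|L_0|/\bar n$, a uniform node of $L_1$ with probability $|L_1|/\bar n$ (both without queries), and otherwise repeatedly call Reach to obtain $w$ and accept it with probability $\min(1, rs_0/rs(w))$ until a node is accepted. *)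

theory Defs
  imports "HOL-Probability.Probability"
begin

(* Undirected graph: vertex set V :: nat set, symmetric edge relation E :: (nat \<times> nat) set. *)

definition nbrs :: "(nat \<times> nat) set \<Rightarrow> nat \<Rightarrow> nat set" where
  "nbrs E v = {u. (v, u) \<in> E}"

definition layer1 :: "(nat \<times> nat) set \<Rightarrow> nat set \<Rightarrow> nat set" where
  "layer1 E L0 = (\<Union>v\<in>L0. nbrs E v) - L0"

definition layer2 :: "(nat \<times> nat) set \<Rightarrow> nat set \<Rightarrow> nat set" where
  "layer2 E L0 = (\<Union>u\<in>layer1 E L0. nbrs E u) - L0 - layer1 E L0"

definition layer_ge2 :: "nat set \<Rightarrow> (nat \<times> nat) set \<Rightarrow> nat set \<Rightarrow> nat set" where
  "layer_ge2 V E L0 = V - L0 - layer1 E L0"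

definition edges_ge2 :: "nat set \<Rightarrow> (nat \<times> nat) set \<Rightarrow> nat set \<Rightarrow> (nat \<times> nat) set" where
  "edges_ge2 V E L0 = {(x, y) \<in> E. x \<in> layer_ge2 V E L0 \<and> y \<in> layer_ge2 V E L0
       \<and> \<not> (x \<in> layer2 E L0 \<and> y \<in> layer2 E L0)}"

definition comp_ge2 :: "nat set \<Rightarrow> (nat \<times> nat) set \<Rightarrow> nat set \<Rightarrow> nat \<Rightarrow> nat set" where
  "comp_ge2 V E L0 v = {y. (v, y) \<in> (edges_ge2 V E L0)\<^sup>*}"

definition components_ge2 :: "nat set \<Rightarrow> (nat \<times> nat) set \<Rightarrow> nat set \<Rightarrow> nat set set" where
  "components_ge2 V E L0 = comp_ge2 V E L0 ` layer_ge2 V E L0"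

(* edges between L0 and L1, as (L0-endpoint, L1-endpoint) pairs; d^+(L0) is its cardinality *)
definition edges01 :: "(nat \<times> nat) set \<Rightarrow> nat set \<Rightarrow> (nat \<times> nat) set" where
  "edges01 E L0 = {(x, u). x \<in> L0 \<and> u \<in> layer1 E L0 \<and> (x, u) \<in> E}"

definition dplus :: "(nat \<times> nat) set \<Rightarrow> nat set \<Rightarrow> nat" where
  "dplus E L0 = card (edges01 E L0)"

definition alpha :: "(nat \<times> nat) set \<Rightarrow> nat set \<Rightarrow> real" where
  "alpha E L0 = real (card {(x, u) \<in> edges01 E L0. nbrs E u \<inter> layer2 E L0 \<noteq> {}})
                / real (card (edges01 E L0))"

(* queries needed to compute the reachability score of a node of component C:
   query every L1-neighbour of C (to learn its number of L2-neighbours) *)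
definition rs_cost :: "(nat \<times> nat) set \<Rightarrow> nat set \<Rightarrow> nat set \<Rightarrow> nat" where
  "rs_cost E L0 C = card {u \<in> layer1 E L0. \<exists>y\<in>C. (y, u) \<in> E}"

(* One reaching attempt: returns (Some output | None on failure, number of queries made) *)
definition attempt :: "nat set \<Rightarrow> (nat \<times> nat) set \<Rightarrow> nat set \<Rightarrow> (nat option \<times> nat) pmf" where
  "attempt V E L0 =
     do { (x, u) \<leftarrow> pmf_of_set (edges01 E L0);
          if nbrs E u \<inter> layer2 E L0 = {} then return_pmf (None, 1)
          else do { v \<leftarrow> pmf_of_set (nbrs E u \<inter> layer2 E L0);
                    w \<leftarrow> pmf_of_set (comp_ge2 V E L0 v);
                    return_pmf (Some w, 1 + card (comp_ge2 V E L0 v)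
                                           + rs_cost E L0 (comp_ge2 V E L0 v)) } }"

definition rs :: "nat set \<Rightarrow> (nat \<times> nat) set \<Rightarrow> nat set \<Rightarrow> nat \<Rightarrow> real" where
  "rs V E L0 v = real (dplus E L0) * pmf (map_pmf fst (attempt V E L0)) (Some v)"

partial_function (spmf) reach :: "nat set \<Rightarrow> (nat \<times> nat) set \<Rightarrow> nat set \<Rightarrow> nat \<Rightarrow> (nat \<times> nat) spmf" where
  "reach V E L0 acc =
     bind_spmf (spmf_of_pmf (attempt V E L0)) (\<lambda>(r, q).
       (case r of None \<Rightarrow> reach V E L0 (acc + q)
                | Some w \<Rightarrow> return_spmf (w, acc + q)))"

partial_function (spmf) reach_reject :: "nat set \<Rightarrow> (nat \<times> nat) set \<Rightarrow> nat set \<Rightarrow> real \<Rightarrow> nat \<Rightarrow> (nat \<times> nat) spmf" where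
  "reach_reject V E L0 rs0 acc =
     bind_spmf (reach V E L0 0) (\<lambda>(w, q).
       bind_spmf (spmf_of_pmf (bernoulli_pmf (min 1 (rs0 / rs V E L0 w)))) (\<lambda>b.
         if b then return_spmf (w, acc + q) else reach_reject V E L0 rs0 (acc + q)))"

(* Sampling phase: output (node, number of queries); nbar = |L0| + |L1| + lbar.
   With prob |L0|/nbar uniform in L0, with prob |L1|/nbar uniform in L1 (no queries),
   otherwise Reach with rejection. *)
definition sample :: "nat set \<Rightarrow> (nat \<times> nat) set \<Rightarrow> nat set \<Rightarrow> real \<Rightarrow> real \<Rightarrow> (nat \<times> nat) spmf" where
  "sample V E L0 lbar rs0 =
     (let n0 = real (card L0); n1 = real (card (layer1 E L0)); nbar = n0 + n1 + lbar in
      bind_spmf (spmf_of_pmf (bernoulli_pmf (n0 / nbar))) (\<lambda>b0.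
        if b0 then map_spmf (\<lambda>x. (x, 0)) (spmf_of_pmf (pmf_of_set L0))
        else bind_spmf (spmf_of_pmf (bernoulli_pmf (n1 / (n1 + lbar)))) (\<lambda>b1.
          if b1 then map_spmf (\<lambda>x. (x, 0)) (spmf_of_pmf (pmf_of_set (layer1 E L0)))
          else reach_reject V E L0 rs0 0)))"

definition w_param :: "nat set \<Rightarrow> (nat \<times> nat) set \<Rightarrow> nat set \<Rightarrow> real" where
  "w_param V E L0 = (\<integral>v. real (card (comp_ge2 V E L0 v)) \<partial>measure_spmf (map_spmf fst (reach V E L0 0)))"

definition expected_queries :: "(nat \<times> nat) spmf \<Rightarrow> ennreal" where
  "expected_queries p = (\<integral>\<^sup>+ xq. ennreal (real (snd xq)) \<partial>measure_spmf p)"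

end

theory Submission
  imports Defs
begin


lemma nn_bind_spmf:
  "(\<integral>\<^sup>+x. h x \<partial>measure_spmf (bind_spmf p f)) = (\<integral>\<^sup>+y. (\<integral>\<^sup>+x. h x \<partial>measure_spmf (f y)) \<partial>measure_spmf p)"
  unfolding measure_spmf_bind
  by (subst nn_integral_bind[where B="count_space UNIV"]) (auto simp: measurable_spmf_measure1 o_def intro!: measurable_comp[OF _ measurable_measure_spmf])

lemma nn_integral_lub_spmf:
  fixes Y :: "('a::countable) spmf set"
  assumes ch: "Complete_Partial_Order.chain (ord_spmf (=)) Y" and ne: "Y \<noteq> {}"
  shows "(\<integral>\<^sup>+x. h x \<partial>measure_spmf (lub_spmf Y)) = (SUP p\<in>Y. \<integral>\<^sup>+x. h x \<partial>measure_spmf p)"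
proof -
  have "(\<integral>\<^sup>+x. h x \<partial>measure_spmf (lub_spmf Y)) = (\<integral>\<^sup>+x. ennreal (spmf (lub_spmf Y) x) * h x \<partial>count_space UNIV)"
    by (rule nn_integral_measure_spmf)
  also have "\<dots> = (\<integral>\<^sup>+x. (SUP p\<in>Y. ennreal (spmf p x) * h x) \<partial>count_space UNIV)"
    by (simp add: ennreal_spmf_lub_spmf[OF ch ne] SUP_mult_right_ennreal ne)
  also have "\<dots> = (SUP p\<in>Y. \<integral>\<^sup>+x. ennreal (spmf p x) * h x \<partial>count_space UNIV)"
  proof (rule nn_integral_monotone_convergence_SUP_countable[OF ne])
    show "Complete_Partial_Order.chain (\<le>) ((\<lambda>p x. ennreal (spmf p x) * h x) ` Y)"
    proof (rule chain_imageI[OF ch])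
      fix p q :: "'a spmf" assume "ord_spmf (=) p q"
      then show "(\<lambda>x. ennreal (spmf p x) * h x) \<le> (\<lambda>x. ennreal (spmf q x) * h x)"
        by (auto simp: le_fun_def intro!: mult_right_mono dest: ord_spmf_eq_leD)
    qed
  qed simp
  also have "\<dots> = (SUP p\<in>Y. \<integral>\<^sup>+x. h x \<partial>measure_spmf p)"
    by (simp add: nn_integral_measure_spmf)
  finally show ?thesis .
qed

lemma adm_nn:
  fixes k :: "'i \<Rightarrow> 'b" and h1 h2 :: "'i \<Rightarrow> ('a::countable) \<Rightarrow> ennreal"
  shows "spmf.admissible (\<lambda>f. \<forall>i. (\<integral>\<^sup>+x. h1 i x \<partial>measure_spmf (f (k i))) \<le> (\<integral>\<^sup>+x. h2 i x \<partial>measure_spmf (f (k i))))"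
proof (rule ccpo.admissibleI)
  fix Y :: "('b \<Rightarrow> 'a spmf) set"
  assume ch: "Complete_Partial_Order.chain spmf.le_fun Y" and ne: "Y \<noteq> {}"
    and H: "\<forall>f\<in>Y. \<forall>i. (\<integral>\<^sup>+x. h1 i x \<partial>measure_spmf (f (k i))) \<le> (\<integral>\<^sup>+x. h2 i x \<partial>measure_spmf (f (k i)))"
  show "\<forall>i. (\<integral>\<^sup>+x. h1 i x \<partial>measure_spmf (spmf.lub_fun Y (k i))) \<le> (\<integral>\<^sup>+x. h2 i x \<partial>measure_spmf (spmf.lub_fun Y (k i)))"
  proof
    fix i
    let ?Z = "(\<lambda>f. f (k i)) ` Y"
    have chZ: "Complete_Partial_Order.chain (ord_spmf (=)) ?Z"
      using ch by (rule chain_imageI) (simp add: fun_ord_def)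
    have neZ: "?Z \<noteq> {}" using ne by simp
    have "spmf.lub_fun Y (k i) = lub_spmf ?Z" by (simp add: fun_lub_apply)
    moreover have "(SUP p\<in>?Z. \<integral>\<^sup>+x. h1 i x \<partial>measure_spmf p) \<le> (SUP p\<in>?Z. \<integral>\<^sup>+x. h2 i x \<partial>measure_spmf p)"
      using H by (auto intro!: SUP_mono)
    ultimately show "(\<integral>\<^sup>+x. h1 i x \<partial>measure_spmf (spmf.lub_fun Y (k i))) \<le> (\<integral>\<^sup>+x. h2 i x \<partial>measure_spmf (spmf.lub_fun Y (k i)))"
      by (simp add: nn_integral_lub_spmf[OF chZ neZ])
  qed
qed

lemma ennreal_cancel_le: "a + x \<le> b + y \<Longrightarrow> y \<le> x \<Longrightarrow> x \<noteq> \<top> \<Longrightarrow> a \<le> (b::ennreal)"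
  by (metis ennreal_add_diff_cancel_right ennreal_minus_mono less_top not_less)

lemma reach_cost:
  fixes g :: "nat \<Rightarrow> ennreal" and \<beta> :: ennreal
  assumes HN: "\<And>r q. (r, q) \<in> set_pmf (attempt V E L0) \<Longrightarrow> r = None \<Longrightarrow> q \<le> 1"
    and HS: "\<And>w q. (Some w, q) \<in> set_pmf (attempt V E L0) \<Longrightarrow> ennreal (real q) \<le> g w"
    and Hs: "emeasure (measure_pmf (attempt V E L0)) {d. fst d = None} \<le> \<beta> * emeasure (measure_pmf (attempt V E L0)) {d. fst d \<noteq> None}"
    and fin: "\<beta> \<noteq> \<top>"
  shows "\<forall>acc. (\<integral>\<^sup>+x. ennreal (real (snd x)) \<partial>measure_spmf (reach V E L0 acc))
     \<le> (\<integral>\<^sup>+x. (ennreal (real acc) + \<beta> + g (fst x)) \<partial>measure_spmf (reach V E L0 acc))"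
proof (induction rule: reach.fixp_induct)
  case 1
  show ?case using adm_nn[of "\<lambda>acc. (((V,E),L0),acc)" "\<lambda>acc x. ennreal (real (snd x))" "\<lambda>acc x. ennreal (real acc) + \<beta> + g (fst x)"]
    by simp
next
  case 2
  show ?case by simp
next
  case (3 f)
  show ?case
  proof
    fix acc
    let ?A = "attempt V E L0"
    let ?k = "(\<lambda>d. case d of (None, q) \<Rightarrow> f V E L0 (acc + q) | (Some w, q) \<Rightarrow> return_spmf (w, acc + q))"
    define \<Phi> where "\<Phi> d = (\<integral>\<^sup>+x. ennreal (real (snd x)) \<partial>measure_spmf (?k d))" for d
    define \<Psi> where "\<Psi> d = (\<integral>\<^sup>+x. (ennreal (real acc) + \<beta> + g (fst x)) \<partial>measure_spmf (?k d))" for d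
    have pt: "\<Phi> d + \<beta> * indicator {d. fst d \<noteq> None} d \<le> \<Psi> d + indicator {d. fst d = None} d"
      if dA: "d \<in> set_pmf ?A" for d
    proof (cases d)
      case (Pair r q)
      show ?thesis
      proof (cases r)
        case None
        let ?M = "measure_spmf (f V E L0 (acc + q))"
        have "\<Phi> d \<le> (\<integral>\<^sup>+x. (ennreal (real (acc+q)) + \<beta> + g (fst x)) \<partial>?M)"
          using spec[OF 3, of "acc+q"] by (simp add: \<Phi>_def Pair None del: of_nat_add)
        also have "\<dots> = (\<integral>\<^sup>+x. ((ennreal (real acc) + \<beta> + g (fst x)) + ennreal (real q)) \<partial>?M)"
          by (rule nn_integral_cong) (simp add: ennreal_plus[symmetric] add_ac del: ennreal_plus)
        also have "\<dots> = \<Psi> d + (\<integral>\<^sup>+x. ennreal (real q) \<partial>?M)"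
          by (subst nn_integral_add) (auto simp: \<Psi>_def Pair None)
        also have "(\<integral>\<^sup>+x. ennreal (real q) \<partial>?M) \<le> 1"
        proof -
          have "(\<integral>\<^sup>+x. ennreal (real q) \<partial>?M) = ennreal (real q) * emeasure ?M (space ?M)"
            by (simp add: nn_integral_const)
          also have "\<dots> \<le> 1 * 1"
            using HN[of r q] dA Pair None measure_spmf.emeasure_space_le_1
            by (intro mult_mono) auto
          finally show ?thesis by simp
        qed
        finally show ?thesis by (simp add: Pair None add_mono)
      next
        case (Some w)
        have "\<Phi> d = ennreal (real acc) + ennreal (real q)"
          by (simp add: \<Phi>_def Pair Some measure_spmf_return_spmf nn_integral_return ennreal_plus[symmetric] del: ennreal_plus)
        moreover have "\<Psi> d = ennreal (real acc) + \<beta> + g w"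
          by (simp add: \<Psi>_def Pair Some measure_spmf_return_spmf nn_integral_return)
        moreover have "ennreal (real q) \<le> g w" using HS[of w q] dA Pair Some by simp
        ultimately show ?thesis
          by (simp add: Pair Some add_ac add_left_mono)
      qed
    qed
    have "(\<integral>\<^sup>+d. \<Phi> d \<partial>?A) + \<beta> * emeasure (measure_pmf ?A) {d. fst d \<noteq> None}
        = (\<integral>\<^sup>+d. (\<Phi> d + \<beta> * indicator {d. fst d \<noteq> None} d) \<partial>?A)"
      by (subst nn_integral_add) (auto simp: nn_integral_cmult_indicator)
    also have "\<dots> \<le> (\<integral>\<^sup>+d. (\<Psi> d + indicator {d. fst d = None} d) \<partial>?A)"
      by (rule nn_integral_mono_AE) (simp only: AE_measure_pmf_iff, use pt in blast)
    also have "\<dots> = (\<integral>\<^sup>+d. \<Psi> d \<partial>?A) + emeasure (measure_pmf ?A) {d. fst d = None}"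
      by (subst nn_integral_add) auto
    finally have I: "(\<integral>\<^sup>+d. \<Phi> d \<partial>?A) + \<beta> * emeasure (measure_pmf ?A) {d. fst d \<noteq> None}
        \<le> (\<integral>\<^sup>+d. \<Psi> d \<partial>?A) + emeasure (measure_pmf ?A) {d. fst d = None}" .
    have fin2: "\<beta> * emeasure (measure_pmf ?A) {d. fst d \<noteq> None} \<noteq> \<top>"
      using fin by (simp add: ennreal_mult_eq_top_iff measure_pmf.emeasure_finite)
    have "(\<integral>\<^sup>+d. \<Phi> d \<partial>?A) \<le> (\<integral>\<^sup>+d. \<Psi> d \<partial>?A)"
      by (rule ennreal_cancel_le[OF I Hs fin2])
    then show "(\<integral>\<^sup>+x. ennreal (real (snd x)) \<partial>measure_spmf (spmf_of_pmf ?A \<bind> ?k))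
       \<le> (\<integral>\<^sup>+x. (ennreal (real acc) + \<beta> + g (fst x)) \<partial>measure_spmf (spmf_of_pmf ?A \<bind> ?k))"
      by (simp only: nn_bind_spmf measure_spmf_spmf_of_pmf \<Phi>_def \<Psi>_def)
  qed
qed



lemma nn_one_spmf: "(\<integral>\<^sup>+x. 1 \<partial>measure_spmf p) = ennreal (weight_spmf p)"
  by (simp add: weight_spmf_def measure_spmf.emeasure_eq_measure)

lemma lossless_from_bounds:
  assumes H: "\<And>n. ennreal (1 - (1-s)^n) \<le> (\<integral>\<^sup>+x. 1 \<partial>measure_spmf p)" and s: "0 < s" "s \<le> 1"
  shows "lossless_spmf p"
proof (rule ccontr)
  assume "\<not> lossless_spmf p"
  then have lt: "weight_spmf p < 1" using weight_spmf_le_1[of p] by (auto simp: lossless_spmf_def)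
  obtain n where n: "(1-s)^n < 1 - weight_spmf p" using real_arch_pow_inv[of "1 - weight_spmf p" "1-s"] lt s by auto
  have "ennreal (1 - (1-s)^n) \<le> ennreal (weight_spmf p)" using H[of n] unfolding nn_one_spmf .
  then have "1 - (1-s)^n \<le> weight_spmf p" using weight_spmf_nonneg[of p] by (simp add: ennreal_le_iff)
  with n show False by simp
qed

lemma reach_lossless:
  assumes spos: "0 < measure_pmf.prob (attempt V E L0) {d. fst d \<noteq> None}"
  shows "lossless_spmf (reach V E L0 acc)"
proof -
  let ?A = "attempt V E L0"
  define s where "s = measure_pmf.prob ?A {d. fst d \<noteq> None}"
  have s: "0 < s" using spos by (simp add: s_def)
  have s1: "s \<le> 1" by (simp add: s_def)
  have sN: "measure_pmf.prob ?A {d. fst d = None} = 1 - s"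
  proof -
    have e: "measure_pmf.prob ?A (space (measure_pmf ?A) - {d. fst d \<noteq> None}) = 1 - s"
      unfolding s_def by (rule measure_pmf.prob_compl) simp
    moreover have "space (measure_pmf ?A) - {d. fst d \<noteq> None} = {d. fst d = None}" by auto
    ultimately show ?thesis by simp
  qed
  have "\<forall>acc. ennreal (1 - (1-s)^n) \<le> (\<integral>\<^sup>+x. 1 \<partial>measure_spmf (reach V E L0 acc))" for n
  proof (induction n)
    case 0 then show ?case by simp
  next
    case (Suc n)
    show ?case
    proof
      fix acc
      let ?k = "(\<lambda>d. case d of (None, q) \<Rightarrow> reach V E L0 (acc + q) | (Some w, q) \<Rightarrow> return_spmf (w, acc + q))"
      define m where "m = 1 - (1-s)^n"
      have m0: "0 \<le> m" "m \<le> 1" using s s1 by (auto simp: m_def power_le_one)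
      have pt: "ennreal m * indicator {d. fst d = None} d + indicator {d. fst d \<noteq> None} d \<le> (\<integral>\<^sup>+x. 1 \<partial>measure_spmf (?k d))" for d
      proof (cases d)
        case (Pair r q)
        then show ?thesis using spec[OF Suc, of "acc+q"]
          by (cases r) (auto simp: m_def measure_spmf_return_spmf)
      qed
      have r: "1 - (1-s)^Suc n = m * (1 - s) + s" by (simp add: m_def algebra_simps)
      have "ennreal (1 - (1-s)^Suc n) = ennreal m * ennreal (1 - s) + ennreal s"
        unfolding r using m0 s s1 by (simp add: ennreal_mult ennreal_plus)
      also have "\<dots> = (\<integral>\<^sup>+d. (ennreal m * indicator {d. fst d = None} d + indicator {d. fst d \<noteq> None} d) \<partial>?A)"
        by (subst nn_integral_add) (auto simp: nn_integral_cmult_indicator measure_pmf.emeasure_eq_measure sN s_def)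
      also have "\<dots> \<le> (\<integral>\<^sup>+d. (\<integral>\<^sup>+x. 1 \<partial>measure_spmf (?k d)) \<partial>?A)"
        by (rule nn_integral_mono) (rule pt)
      also have "\<dots> = (\<integral>\<^sup>+x. 1 \<partial>measure_spmf (reach V E L0 acc))"
        by (subst (2) reach.simps) (simp only: nn_bind_spmf measure_spmf_spmf_of_pmf case_prod_unfold)
      finally show "ennreal (1 - (1-s)^Suc n) \<le> (\<integral>\<^sup>+x. 1 \<partial>measure_spmf (reach V E L0 acc))" .
    qed
  qed
  then show ?thesis using lossless_from_bounds s s1 by blast
qed

lemma reach_support0:
  "\<forall>acc. (\<integral>\<^sup>+x. indicator {x. \<not> (\<exists>q. (Some (fst x), q) \<in> set_pmf (attempt V E L0))} x \<partial>measure_spmf (reach V E L0 acc))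
     \<le> (\<integral>\<^sup>+x. 0 \<partial>measure_spmf (reach V E L0 acc))"
proof (induction rule: reach.fixp_induct)
  case 1
  show ?case using adm_nn[of "\<lambda>acc. (((V,E),L0),acc)" "\<lambda>acc. indicator {x. \<not> (\<exists>q. (Some (fst x), q) \<in> set_pmf (attempt V E L0))}" "\<lambda>acc x. 0"]
    by simp
next
  case 2
  show ?case by simp
next
  case (3 f)
  show ?case
  proof
    fix acc
    let ?A = "attempt V E L0"
    let ?B = "{x. \<not> (\<exists>q. (Some (fst x), q) \<in> set_pmf (attempt V E L0))}"
    let ?k = "(\<lambda>d. case d of (None, q) \<Rightarrow> f V E L0 (acc + q) | (Some w, q) \<Rightarrow> return_spmf (w, acc + q))"
    have pt: "(\<integral>\<^sup>+x. indicator ?B x \<partial>measure_spmf (?k d)) = 0" if dA: "d \<in> set_pmf ?A" for d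
    proof (cases d)
      case (Pair r q)
      show ?thesis
      proof (cases r)
        case None
        then show ?thesis using spec[OF 3, of "acc+q"] by (simp add: Pair)
      next
        case (Some w)
        then show ?thesis using dA by (auto simp: Pair measure_spmf_return_spmf split: split_indicator)
      qed
    qed
    have "(\<integral>\<^sup>+d. (\<integral>\<^sup>+x. indicator ?B x \<partial>measure_spmf (?k d)) \<partial>?A) = (\<integral>\<^sup>+d. 0 \<partial>?A)"
      by (rule nn_integral_cong_AE) (simp only: AE_measure_pmf_iff, use pt in blast)
    then show "(\<integral>\<^sup>+x. indicator ?B x \<partial>measure_spmf (spmf_of_pmf ?A \<bind> ?k)) \<le> (\<integral>\<^sup>+x. 0 \<partial>measure_spmf (spmf_of_pmf ?A \<bind> ?k))"
      by (simp only: nn_bind_spmf measure_spmf_spmf_of_pmf) simp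
  qed
qed

lemma reach_support:
  assumes "x \<in> set_spmf (reach V E L0 acc)"
  shows "\<exists>q. (Some (fst x), q) \<in> set_pmf (attempt V E L0)"
proof -
  let ?B = "{x. \<not> (\<exists>q. (Some (fst x), q) \<in> set_pmf (attempt V E L0))}"
  have "(\<integral>\<^sup>+x. indicator ?B x \<partial>measure_spmf (reach V E L0 acc)) = 0"
    using reach_support0[of V E L0, THEN spec, of acc] by simp
  then have "AE x in measure_spmf (reach V E L0 acc). indicator ?B x = (0::ennreal)"
    by (subst (asm) nn_integral_0_iff_AE) auto
  then have "indicator ?B x = (0::ennreal)" using assms by (auto simp: AE_measure_spmf_iff)
  then show ?thesis by (auto split: split_indicator_asm)
qed


lemma nn_bern: "0 \<le> p \<Longrightarrow> p \<le> 1 \<Longrightarrow>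
  (\<integral>\<^sup>+b. h b \<partial>measure_pmf (bernoulli_pmf p)) = ennreal p * h True + ennreal (1-p) * h False"
  by (subst nn_integral_measure_pmf_support[where A=UNIV]) (auto simp: UNIV_bool mult.commute)

lemma rs_nonneg: "0 \<le> rs V E L0 w"
  by (simp add: rs_def)

lemma p_bounds: "0 \<le> rs0 \<Longrightarrow> 0 \<le> min 1 (rs0 / rs V E L0 w) \<and> min 1 (rs0 / rs V E L0 w) \<le> 1"
  using rs_nonneg[of V E L0 w] by auto

lemma rr_cost:
  fixes Q c :: real
  assumes rs0: "0 \<le> rs0"
    and HQ: "(\<integral>\<^sup>+x. ennreal (real (snd x)) \<partial>measure_spmf (reach V E L0 0)) \<le> ennreal Q"
    and Hp: "ennreal (1/c) \<le> (\<integral>\<^sup>+x. ennreal (min 1 (rs0 / rs V E L0 (fst x))) \<partial>measure_spmf (reach V E L0 0))"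
    and c: "0 < c" and Q: "0 \<le> Q"
  shows "\<forall>acc. (\<integral>\<^sup>+x. ennreal (real (snd x)) \<partial>measure_spmf (reach_reject V E L0 rs0 acc))
     \<le> (\<integral>\<^sup>+x. (ennreal (real acc) + ennreal (c * Q)) \<partial>measure_spmf (reach_reject V E L0 rs0 acc))"
proof (induction rule: reach_reject.fixp_induct)
  case 1
  show ?case using adm_nn[of "\<lambda>acc. ((((V,E),L0),rs0),acc)" "\<lambda>acc x. ennreal (real (snd x))" "\<lambda>acc x. ennreal (real acc) + ennreal (c * Q)"]
    by simp
next
  case 2
  show ?case by simp
next
  case (3 f)
  show ?case
  proof
    fix acc
    let ?R = "reach V E L0 0"
    let ?p = "\<lambda>w. min 1 (rs0 / rs V E L0 w)"
    let ?T = "ennreal (c * Q)"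
    let ?k = "(\<lambda>e. case e of (w, q) \<Rightarrow> spmf_of_pmf (bernoulli_pmf (?p w)) \<bind>
                     (\<lambda>b. if b then return_spmf (w, acc + q) else f V E L0 rs0 (acc + q)))"
    define \<Phi> where "\<Phi> e = (\<integral>\<^sup>+x. ennreal (real (snd x)) \<partial>measure_spmf (?k e))" for e
    define \<Psi> where "\<Psi> e = (\<integral>\<^sup>+x. (ennreal (real acc) + ?T) \<partial>measure_spmf (?k e))" for e
    have pt: "\<Phi> e + ?T * ennreal (?p (fst e)) \<le> \<Psi> e + ennreal (real (snd e))" for e
    proof (cases e)
      case (Pair w q)
      let ?M = "measure_spmf (f V E L0 rs0 (acc + q))"
      define X where "X = (\<integral>\<^sup>+x. (ennreal (real acc) + ?T) \<partial>?M)"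
      define P where "P = ennreal (?p w)"
      define P' where "P' = ennreal (1 - ?p w)"
      have pb: "0 \<le> ?p w" "?p w \<le> 1" using p_bounds[OF rs0] by auto
      have PP: "P + P' = 1" using pb by (simp add: P_def P'_def ennreal_plus[symmetric] del: ennreal_plus)
      have Phi: "\<Phi> e = P * (ennreal (real acc) + ennreal (real q)) + P' * (\<integral>\<^sup>+x. ennreal (real (snd x)) \<partial>?M)"
        unfolding \<Phi>_def Pair case_prod_conv nn_bind_spmf measure_spmf_spmf_of_pmf
        using pb by (simp add: mult.commute nn_bern P_def P'_def measure_spmf_return_spmf nn_integral_return ennreal_plus[symmetric] del: ennreal_plus)
      have Psi: "\<Psi> e = P * (ennreal (real acc) + ?T) + P' * X"
        unfolding \<Psi>_def Pair case_prod_conv nn_bind_spmf measure_spmf_spmf_of_pmf nn_bern[OF pb] if_True if_False X_def P_def P'_def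
        by (simp add: measure_spmf_return_spmf nn_integral_return)
      have IH: "(\<integral>\<^sup>+x. ennreal (real (snd x)) \<partial>?M) \<le> X + ennreal (real q)"
      proof -
        have "(\<integral>\<^sup>+x. ennreal (real (snd x)) \<partial>?M) \<le> (\<integral>\<^sup>+x. (ennreal (real (acc+q)) + ?T) \<partial>?M)"
          using spec[OF 3, of "acc+q"] by (simp del: of_nat_add)
        also have "\<dots> = (\<integral>\<^sup>+x. ((ennreal (real acc) + ?T) + ennreal (real q)) \<partial>?M)"
          by (rule nn_integral_cong) (simp add: ennreal_plus[symmetric] add_ac del: ennreal_plus)
        also have "\<dots> = X + (\<integral>\<^sup>+x. ennreal (real q) \<partial>?M)"
          by (subst nn_integral_add) (auto simp: X_def)
        also have "(\<integral>\<^sup>+x. ennreal (real q) \<partial>?M) \<le> ennreal (real q)"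
        proof -
          have "(\<integral>\<^sup>+x. ennreal (real q) \<partial>?M) = ennreal (real q) * emeasure ?M (space ?M)"
            by (simp add: nn_integral_const)
          also have "\<dots> \<le> ennreal (real q) * 1"
            using measure_spmf.emeasure_space_le_1 by (intro mult_left_mono) auto
          finally show ?thesis by simp
        qed
        finally show ?thesis by (simp add: add_left_mono)
      qed
      have "\<Phi> e + ?T * P \<le> P * (ennreal (real acc) + ennreal (real q)) + P' * (X + ennreal (real q)) + ?T * P"
        unfolding Phi by (intro add_mono mult_left_mono IH order_refl) auto
      also have "\<dots> = P * (ennreal (real acc) + ?T) + P' * X + (P + P') * ennreal (real q)"
        by (simp add: algebra_simps)
      also have "\<dots> = \<Psi> e + ennreal (real q)" by (simp add: PP Psi)
      finally show ?thesis by (simp add: Pair P_def)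
    qed
    have I: "(\<integral>\<^sup>+e. \<Phi> e \<partial>measure_spmf ?R) + ?T * (\<integral>\<^sup>+e. ennreal (?p (fst e)) \<partial>measure_spmf ?R)
       \<le> (\<integral>\<^sup>+e. \<Psi> e \<partial>measure_spmf ?R) + (\<integral>\<^sup>+e. ennreal (real (snd e)) \<partial>measure_spmf ?R)"
    proof -
      have "(\<integral>\<^sup>+e. \<Phi> e \<partial>measure_spmf ?R) + ?T * (\<integral>\<^sup>+e. ennreal (?p (fst e)) \<partial>measure_spmf ?R)
          = (\<integral>\<^sup>+e. (\<Phi> e + ?T * ennreal (?p (fst e))) \<partial>measure_spmf ?R)"
        by (subst nn_integral_add) (auto simp: nn_integral_cmult)
      also have "\<dots> \<le> (\<integral>\<^sup>+e. (\<Psi> e + ennreal (real (snd e))) \<partial>measure_spmf ?R)"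
        by (rule nn_integral_mono) (rule pt)
      also have "\<dots> = (\<integral>\<^sup>+e. \<Psi> e \<partial>measure_spmf ?R) + (\<integral>\<^sup>+e. ennreal (real (snd e)) \<partial>measure_spmf ?R)"
        by (subst nn_integral_add) auto
      finally show ?thesis .
    qed
    have le: "(\<integral>\<^sup>+e. ennreal (real (snd e)) \<partial>measure_spmf ?R) \<le> ?T * (\<integral>\<^sup>+e. ennreal (?p (fst e)) \<partial>measure_spmf ?R)"
    proof -
      have "?T * ennreal (1/c) = ennreal Q" using c Q by (simp add: ennreal_mult[symmetric])
      then have "ennreal Q \<le> ?T * (\<integral>\<^sup>+e. ennreal (?p (fst e)) \<partial>measure_spmf ?R)"
        using Hp by (metis mult_left_mono zero_le)
      then show ?thesis using HQ by simp
    qed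
    have fin: "?T * (\<integral>\<^sup>+e. ennreal (?p (fst e)) \<partial>measure_spmf ?R) \<noteq> \<top>"
    proof -
      have "(\<integral>\<^sup>+e. ennreal (?p (fst e)) \<partial>measure_spmf ?R) \<le> (\<integral>\<^sup>+e. 1 \<partial>measure_spmf ?R)"
        using p_bounds[OF rs0] by (intro nn_integral_mono) auto
      also have "\<dots> \<le> 1" using measure_spmf.emeasure_space_le_1 by simp
      finally show ?thesis by (auto simp: ennreal_mult_eq_top_iff top_unique)
    qed
    have "(\<integral>\<^sup>+e. \<Phi> e \<partial>measure_spmf ?R) \<le> (\<integral>\<^sup>+e. \<Psi> e \<partial>measure_spmf ?R)"
      by (rule ennreal_cancel_le[OF I le fin])
    then show "(\<integral>\<^sup>+x. ennreal (real (snd x)) \<partial>measure_spmf (?R \<bind> ?k))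
       \<le> (\<integral>\<^sup>+x. (ennreal (real acc) + ?T) \<partial>measure_spmf (?R \<bind> ?k))"
      by (simp only: nn_bind_spmf \<Phi>_def \<Psi>_def)
  qed
qed

lemma rr_lossless:
  assumes rs0: "0 \<le> rs0" and c: "1 \<le> c"
    and L: "lossless_spmf (reach V E L0 0)"
    and Hp: "\<forall>x\<in>set_spmf (reach V E L0 0). 1/c \<le> min 1 (rs0 / rs V E L0 (fst x))"
  shows "lossless_spmf (reach_reject V E L0 rs0 acc)"
proof -
  define s where "s = 1/c"
  have s: "0 < s" "s \<le> 1" using c by (auto simp: s_def)
  let ?R = "reach V E L0 0"
  let ?p = "\<lambda>w. min 1 (rs0 / rs V E L0 w)"
  have "\<forall>acc. ennreal (1 - (1-s)^n) \<le> (\<integral>\<^sup>+x. 1 \<partial>measure_spmf (reach_reject V E L0 rs0 acc))" for n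
  proof (induction n)
    case 0 then show ?case by simp
  next
    case (Suc n)
    show ?case
    proof
      fix acc
      let ?k = "(\<lambda>e. case e of (w, q) \<Rightarrow> spmf_of_pmf (bernoulli_pmf (?p w)) \<bind>
                     (\<lambda>b. if b then return_spmf (w, acc + q) else reach_reject V E L0 rs0 (acc + q)))"
      define m where "m = 1 - (1-s)^n"
      have m0: "0 \<le> m" "m \<le> 1" using s by (auto simp: m_def power_le_one)
      have pt: "ennreal (s + (1 - s) * m) \<le> (\<integral>\<^sup>+x. 1 \<partial>measure_spmf (?k e))" if eR: "e \<in> set_spmf ?R" for e
      proof (cases e)
        case (Pair w q)
        have pb: "0 \<le> ?p w" "?p w \<le> 1" using p_bounds[OF rs0] by auto
        have ps: "s \<le> ?p w" using Hp eR by (auto simp: s_def Pair)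
        have "ennreal (s + (1 - s) * m) \<le> ennreal (?p w + (1 - ?p w) * m)"
        proof (rule ennreal_leI)
          have "(?p w + (1 - ?p w) * m) - (s + (1 - s) * m) = (?p w - s) * (1 - m)" by (simp add: algebra_simps)
          also have "\<dots> \<ge> 0" using ps m0 by simp
          finally show "s + (1 - s) * m \<le> ?p w + (1 - ?p w) * m" by simp
        qed
        also have "\<dots> = ennreal (?p w) * 1 + ennreal (1 - ?p w) * ennreal m"
          using pb m0 by (simp add: ennreal_mult ennreal_plus)
        also have "\<dots> \<le> ennreal (?p w) * 1 + ennreal (1 - ?p w) * (\<integral>\<^sup>+x. 1 \<partial>measure_spmf (reach_reject V E L0 rs0 (acc + q)))"
          using spec[OF Suc, of "acc+q"] by (intro add_mono mult_left_mono order_refl) (auto simp: m_def)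
        also have "\<dots> = (\<integral>\<^sup>+x. 1 \<partial>measure_spmf (?k e))"
          unfolding Pair case_prod_conv nn_bind_spmf measure_spmf_spmf_of_pmf nn_bern[OF pb] if_True if_False
          by (simp add: measure_spmf_return_spmf)
        finally show ?thesis .
      qed
      have r: "1 - (1-s)^Suc n = s + (1 - s) * m" by (simp add: m_def algebra_simps)
      have "ennreal (1 - (1-s)^Suc n) = (\<integral>\<^sup>+e. ennreal (s + (1 - s) * m) \<partial>measure_spmf ?R)"
        unfolding r using L by (simp add: lossless_spmf_def measure_spmf.emeasure_eq_measure weight_spmf_def[symmetric])
      also have "\<dots> \<le> (\<integral>\<^sup>+e. (\<integral>\<^sup>+x. 1 \<partial>measure_spmf (?k e)) \<partial>measure_spmf ?R)"
        by (rule nn_integral_mono_AE) (simp only: AE_measure_spmf_iff, use pt in blast)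
      also have "\<dots> = (\<integral>\<^sup>+x. 1 \<partial>measure_spmf (reach_reject V E L0 rs0 acc))"
        by (subst (2) reach_reject.simps) (simp only: nn_bind_spmf)
      finally show "ennreal (1 - (1-s)^Suc n) \<le> (\<integral>\<^sup>+x. 1 \<partial>measure_spmf (reach_reject V E L0 rs0 acc))" .
    qed
  qed
  then show ?thesis using lossless_from_bounds s by blast
qed


lemma edges_ge2_sub: "edges_ge2 V E L0 \<subseteq> E"
  by (auto simp: edges_ge2_def)

lemma comp_sub:
  assumes "E \<subseteq> V \<times> V"
  shows "comp_ge2 V E L0 v \<subseteq> insert v V"
proof
  fix y assume "y \<in> comp_ge2 V E L0 v"
  then have "(v, y) \<in> (edges_ge2 V E L0)\<^sup>*" by (simp add: comp_ge2_def)
  then show "y \<in> insert v V"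
  proof (induction rule: rtrancl_induct)
    case base then show ?case by simp
  next
    case (step y z)
    then have "(y, z) \<in> E" using edges_ge2_sub[of V E L0] by blast
    then show ?case using assms by blast
  qed
qed

lemma comp_finite: "finite V \<Longrightarrow> E \<subseteq> V \<times> V \<Longrightarrow> finite (comp_ge2 V E L0 v)"
  by (rule finite_subset[OF comp_sub]) auto

lemma comp_refl: "v \<in> comp_ge2 V E L0 v"
  by (simp add: comp_ge2_def)

lemma comp_ne: "comp_ge2 V E L0 v \<noteq> {}"
  using comp_refl by blast

lemma comp_card: "finite V \<Longrightarrow> E \<subseteq> V \<times> V \<Longrightarrow> card (comp_ge2 V E L0 v) \<le> card V + 1"
proof -
  assume a: "finite V" "E \<subseteq> V \<times> V"
  have "card (comp_ge2 V E L0 v) \<le> card (insert v V)"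
    by (rule card_mono) (use a comp_sub in auto)
  also have "\<dots> \<le> card V + 1" using a by (simp add: card_insert_if)
  finally show ?thesis .
qed

lemma edges_ge2_sym: "sym E \<Longrightarrow> sym (edges_ge2 V E L0)"
  by (auto simp: sym_def edges_ge2_def)

lemma comp_mem_iff:
  assumes "sym E"
  shows "x \<in> comp_ge2 V E L0 v \<longleftrightarrow> comp_ge2 V E L0 x = comp_ge2 V E L0 v"
proof
  assume "x \<in> comp_ge2 V E L0 v"
  then have vx: "(v, x) \<in> (edges_ge2 V E L0)\<^sup>*" by (simp add: comp_ge2_def)
  have xv: "(x, v) \<in> (edges_ge2 V E L0)\<^sup>*"
  proof -
    have "sym ((edges_ge2 V E L0)\<^sup>*)" using edges_ge2_sym[OF assms] by (rule sym_rtrancl)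
    then show ?thesis using vx by (rule symD)
  qed
  show "comp_ge2 V E L0 x = comp_ge2 V E L0 v"
    unfolding comp_ge2_def using vx xv by (auto intro: rtrancl_trans)
next
  assume "comp_ge2 V E L0 x = comp_ge2 V E L0 v"
  then show "x \<in> comp_ge2 V E L0 v" using comp_refl by metis
qed

lemma comp_layer:
  assumes "v \<in> layer_ge2 V E L0"
  shows "comp_ge2 V E L0 v \<subseteq> layer_ge2 V E L0"
proof
  fix y assume "y \<in> comp_ge2 V E L0 v"
  then have "(v, y) \<in> (edges_ge2 V E L0)\<^sup>*" by (simp add: comp_ge2_def)
  then show "y \<in> layer_ge2 V E L0"
  proof (induction rule: rtrancl_induct)
    case base then show ?case using assms .
  next
    case (step y z) then show ?case unfolding edges_ge2_def by blast
  qed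
qed

lemma layer2_sub: "E \<subseteq> V \<times> V \<Longrightarrow> layer2 E L0 \<subseteq> layer_ge2 V E L0"
  unfolding layer2_def layer_ge2_def nbrs_def by blast

lemma layer1_disj: "layer1 E L0 \<inter> layer_ge2 V E L0 = {}"
  unfolding layer_ge2_def by blast

lemma edges01_finite: "finite V \<Longrightarrow> E \<subseteq> V \<times> V \<Longrightarrow> finite (edges01 E L0)"
  by (rule finite_subset[of _ "V \<times> V"]) (unfold edges01_def, blast, simp)

lemma nbrs_finite: "finite V \<Longrightarrow> E \<subseteq> V \<times> V \<Longrightarrow> finite (nbrs E u)"
  by (rule finite_subset[of _ V]) (unfold nbrs_def, blast)

lemma attempt_set:
  assumes V: "finite V" "E \<subseteq> V \<times> V" and ne: "edges01 E L0 \<noteq> {}"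
    and rq: "(r, q) \<in> set_pmf (attempt V E L0)"
  shows "(r = None \<and> q = 1) \<or> (\<exists>x u v w. (x, u) \<in> edges01 E L0 \<and> v \<in> nbrs E u \<inter> layer2 E L0
      \<and> w \<in> comp_ge2 V E L0 v \<and> r = Some w \<and> q = 1 + card (comp_ge2 V E L0 v) + rs_cost E L0 (comp_ge2 V E L0 v))"
proof -
  have fin: "finite (nbrs E u \<inter> layer2 E L0)" for u using nbrs_finite[OF V] by blast
  from rq obtain x u where xu: "(x, u) \<in> edges01 E L0"
    and rq2: "(r, q) \<in> set_pmf (if nbrs E u \<inter> layer2 E L0 = {} then return_pmf (None, 1)
          else do { v \<leftarrow> pmf_of_set (nbrs E u \<inter> layer2 E L0);
                    w \<leftarrow> pmf_of_set (comp_ge2 V E L0 v);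
                    return_pmf (Some w, 1 + card (comp_ge2 V E L0 v)
                                           + rs_cost E L0 (comp_ge2 V E L0 v)) })"
    unfolding attempt_def set_bind_pmf set_pmf_of_set[OF ne edges01_finite[OF V]] by auto
  show ?thesis
  proof (cases "nbrs E u \<inter> layer2 E L0 = {}")
    case True then show ?thesis using rq2 by simp
  next
    case False
    then obtain v w where "v \<in> nbrs E u \<inter> layer2 E L0" "w \<in> comp_ge2 V E L0 v"
       "(r, q) = (Some w, 1 + card (comp_ge2 V E L0 v) + rs_cost E L0 (comp_ge2 V E L0 v))"
      using rq2 unfolding set_bind_pmf
      by (auto simp: set_pmf_of_set[OF False fin] set_pmf_of_set[OF comp_ne comp_finite[OF V]])
    then show ?thesis using xu by blast
  qed
qed


lemma pmf_fst_attempt: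
  assumes V: "finite V" "E \<subseteq> V \<times> V" and ne: "edges01 E L0 \<noteq> {}" and sE: "sym E"
  shows "pmf (map_pmf fst (attempt V E L0)) (Some x) =
    measure_pmf.expectation (pmf_of_set (edges01 E L0)) (\<lambda>(x0, u). if nbrs E u \<inter> layer2 E L0 = {} then 0
      else measure_pmf.expectation (pmf_of_set (nbrs E u \<inter> layer2 E L0))
        (\<lambda>v. if comp_ge2 V E L0 v = comp_ge2 V E L0 x then 1 / real (card (comp_ge2 V E L0 x)) else 0))"
proof -
  have fin: "finite (nbrs E u \<inter> layer2 E L0)" for u using nbrs_finite[OF V] by blast
  have inner: "pmf (map_pmf fst (pmf_of_set (comp_ge2 V E L0 v) \<bind> (\<lambda>w. return_pmf (Some w, K)))) (Some x)
      = (if comp_ge2 V E L0 v = comp_ge2 V E L0 x then 1 / real (card (comp_ge2 V E L0 x)) else 0)" for v K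
  proof -
    have "map_pmf fst (pmf_of_set (comp_ge2 V E L0 v) \<bind> (\<lambda>w. return_pmf (Some w, K))) = map_pmf Some (pmf_of_set (comp_ge2 V E L0 v))"
      by (simp add: map_pmf_def bind_assoc_pmf bind_return_pmf)
    then have "pmf (map_pmf fst (pmf_of_set (comp_ge2 V E L0 v) \<bind> (\<lambda>w. return_pmf (Some w, K)))) (Some x)
       = pmf (pmf_of_set (comp_ge2 V E L0 v)) x" by (simp add: pmf_map_inj')
    also have "\<dots> = indicator (comp_ge2 V E L0 v) x / real (card (comp_ge2 V E L0 v))"
      by (rule pmf_of_set[OF comp_ne comp_finite[OF V]])
    also have "\<dots> = (if comp_ge2 V E L0 v = comp_ge2 V E L0 x then 1 / real (card (comp_ge2 V E L0 x)) else 0)"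
      using comp_mem_iff[OF sE, of x V L0 v] by (auto simp: indicator_def)
    finally show ?thesis .
  qed
  have mid: "pmf (map_pmf fst (case y of (x0, u) \<Rightarrow> if nbrs E u \<inter> layer2 E L0 = {} then return_pmf (None, 1)
          else do { v \<leftarrow> pmf_of_set (nbrs E u \<inter> layer2 E L0);
                    w \<leftarrow> pmf_of_set (comp_ge2 V E L0 v);
                    return_pmf (Some w, 1 + card (comp_ge2 V E L0 v)
                                           + rs_cost E L0 (comp_ge2 V E L0 v)) })) (Some x)
     = (case y of (x0, u) \<Rightarrow> if nbrs E u \<inter> layer2 E L0 = {} then 0
      else measure_pmf.expectation (pmf_of_set (nbrs E u \<inter> layer2 E L0))
        (\<lambda>v. if comp_ge2 V E L0 v = comp_ge2 V E L0 x then 1 / real (card (comp_ge2 V E L0 x)) else 0))" for y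
  proof (cases y)
    case (Pair x0 u)
    show ?thesis
    proof (cases "nbrs E u \<inter> layer2 E L0 = {}")
      case True then show ?thesis by (simp add: Pair)
    next
      case False
      let ?N = "pmf_of_set (nbrs E u \<inter> layer2 E L0)"
      let ?g = "\<lambda>v. pmf_of_set (comp_ge2 V E L0 v) \<bind> (\<lambda>w. return_pmf (Some w, 1 + card (comp_ge2 V E L0 v)
                                           + rs_cost E L0 (comp_ge2 V E L0 v)))"
      have "pmf (map_pmf fst (?N \<bind> ?g)) (Some x) = measure_pmf.expectation ?N (\<lambda>v. pmf (map_pmf fst (?g v)) (Some x))"
        by (subst map_bind_pmf, subst pmf_bind, rule refl)
      then show ?thesis using False by (simp only: Pair case_prod_conv if_False inner)
    qed
  qed
  show ?thesis
    unfolding attempt_def map_bind_pmf pmf_bind mid by simp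
qed

lemma rs_comp:
  assumes V: "finite V" "E \<subseteq> V \<times> V" and ne: "edges01 E L0 \<noteq> {}" and sE: "sym E"
    and eq: "comp_ge2 V E L0 x = comp_ge2 V E L0 y"
  shows "rs V E L0 x = rs V E L0 y"
  unfolding rs_def pmf_fst_attempt[OF V ne sE] eq ..


lemma attempt_success:
  assumes V: "finite V" "E \<subseteq> V \<times> V" and ne: "edges01 E L0 \<noteq> {}"
  shows "measure_pmf.prob (attempt V E L0) {d. fst d \<noteq> None} = alpha E L0"
proof -
  let ?U = "pmf_of_set (edges01 E L0)"
  let ?\<psi> = "\<lambda>(x::nat, u). nbrs E u \<inter> layer2 E L0 \<noteq> {}"
  have "map_pmf (\<lambda>d. fst d \<noteq> None) (attempt V E L0) = ?U \<bind> (\<lambda>y. return_pmf (?\<psi> y))"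
    unfolding attempt_def map_bind_pmf
  proof (rule bind_pmf_cong[OF refl])
    fix y :: "nat \<times> nat"
    show "map_pmf (\<lambda>d. fst d \<noteq> None) (case y of (x, u) \<Rightarrow> if nbrs E u \<inter> layer2 E L0 = {} then return_pmf (None, 1)
          else do { v \<leftarrow> pmf_of_set (nbrs E u \<inter> layer2 E L0);
                    w \<leftarrow> pmf_of_set (comp_ge2 V E L0 v);
                    return_pmf (Some w, 1 + card (comp_ge2 V E L0 v)
                                           + rs_cost E L0 (comp_ge2 V E L0 v)) }) = return_pmf (?\<psi> y)"
      by (cases y) (simp add: map_bind_pmf bind_pmf_const)
  qed
  then have m: "map_pmf (\<lambda>d. fst d \<noteq> None) (attempt V E L0) = map_pmf ?\<psi> ?U"
    by (simp add: map_pmf_def)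
  have "measure_pmf.prob (attempt V E L0) {d. fst d \<noteq> None} = pmf (map_pmf (\<lambda>d. fst d \<noteq> None) (attempt V E L0)) True"
    by (simp add: pmf_map vimage_def)
  also have "\<dots> = pmf (map_pmf ?\<psi> ?U) True" by (simp only: m)
  also have "\<dots> = measure_pmf.prob ?U (?\<psi> -` {True})" by (simp add: pmf_map)
  also have "\<dots> = real (card (edges01 E L0 \<inter> ?\<psi> -` {True})) / real (card (edges01 E L0))"
    by (rule measure_pmf_of_set[OF ne edges01_finite[OF V]])
  also have "edges01 E L0 \<inter> ?\<psi> -` {True} = {(x, u) \<in> edges01 E L0. nbrs E u \<inter> layer2 E L0 \<noteq> {}}"
    by auto
  finally show ?thesis by (simp add: alpha_def)
qed

lemma rs_cost_le:
  assumes V: "finite V" "E \<subseteq> V \<times> V" and v: "v \<in> layer2 E L0"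
    and H: "\<forall>C\<in>components_ge2 V E L0. card {(x, y) \<in> E. x \<in> C \<and> y \<notin> C} \<le> d * card C"
  shows "rs_cost E L0 (comp_ge2 V E L0 v) \<le> d * card (comp_ge2 V E L0 v)"
proof -
  let ?C = "comp_ge2 V E L0 v"
  let ?S = "{(x, y) \<in> E. x \<in> ?C \<and> y \<notin> ?C}"
  have vl: "v \<in> layer_ge2 V E L0" using layer2_sub[OF V(2)] v by blast
  have Cl: "?C \<subseteq> layer_ge2 V E L0" by (rule comp_layer[OF vl])
  have Ccomp: "?C \<in> components_ge2 V E L0" using vl by (simp add: components_ge2_def)
  have finS: "finite ?S" by (rule finite_subset[of _ E]) (auto intro: finite_subset[OF V(2)] simp: V(1))
  have "{u \<in> layer1 E L0. \<exists>y\<in>?C. (y, u) \<in> E} \<subseteq> snd ` ?S"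
  proof
    fix u assume u: "u \<in> {u \<in> layer1 E L0. \<exists>y\<in>?C. (y, u) \<in> E}"
    then obtain y where y: "y \<in> ?C" "(y, u) \<in> E" by blast
    have "u \<notin> ?C" using u Cl layer1_disj[of E L0 V] by blast
    then have "(y, u) \<in> ?S" using y by blast
    then show "u \<in> snd ` ?S" by force
  qed
  then have "rs_cost E L0 ?C \<le> card (snd ` ?S)"
    unfolding rs_cost_def by (intro card_mono finite_imageI finS)
  also have "\<dots> \<le> card ?S" by (rule card_image_le[OF finS])
  also have "\<dots> \<le> d * card ?C" using H Ccomp by blast
  finally show ?thesis .
qed

lemma good_facts:
  assumes V: "finite V" "E \<subseteq> V \<times> V" and ne: "edges01 E L0 \<noteq> {}" and sE: "sym E"
    and wq: "(Some w, q) \<in> set_pmf (attempt V E L0)"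
    and H: "\<forall>C\<in>components_ge2 V E L0. card {(x, y) \<in> E. x \<in> C \<and> y \<notin> C} \<le> d * card C"
  shows "\<exists>v\<in>layer2 E L0. comp_ge2 V E L0 w = comp_ge2 V E L0 v \<and> q \<le> 1 + (1 + d) * card (comp_ge2 V E L0 w)"
proof -
  have "\<exists>x u v w'. (x, u) \<in> edges01 E L0 \<and> v \<in> nbrs E u \<inter> layer2 E L0
      \<and> w' \<in> comp_ge2 V E L0 v \<and> Some w = Some w' \<and> q = 1 + card (comp_ge2 V E L0 v) + rs_cost E L0 (comp_ge2 V E L0 v)"
    using attempt_set[OF V ne wq] by simp
  then obtain x u v w' where v: "v \<in> nbrs E u \<inter> layer2 E L0" and wv': "w' \<in> comp_ge2 V E L0 v"
    and ww: "Some w = Some w'"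
    and q: "q = 1 + card (comp_ge2 V E L0 v) + rs_cost E L0 (comp_ge2 V E L0 v)"
    by blast
  have wv: "w \<in> comp_ge2 V E L0 v" using ww wv' by simp
  have eq: "comp_ge2 V E L0 w = comp_ge2 V E L0 v" using comp_mem_iff[OF sE, of w V L0 v] wv by simp
  have "rs_cost E L0 (comp_ge2 V E L0 v) \<le> d * card (comp_ge2 V E L0 v)"
    by (rule rs_cost_le[OF V _ H]) (use v in simp)
  then have "q \<le> 1 + (1 + d) * card (comp_ge2 V E L0 w)" using q eq by simp
  moreover have "v \<in> layer2 E L0" using v by simp
  ultimately show ?thesis using eq by (intro bexI[of _ v]) simp_all
qed

lemma d_pos:
  assumes V: "finite V" "E \<subseteq> V \<times> V" and sE: "sym E" and a: "alpha E L0 > 0"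
    and H: "\<forall>C\<in>components_ge2 V E L0. card {(x, y) \<in> E. x \<in> C \<and> y \<notin> C} \<le> d * card C"
  shows "1 \<le> d"
proof -
  have "card {(x, u) \<in> edges01 E L0. nbrs E u \<inter> layer2 E L0 \<noteq> {}} \<noteq> 0"
  proof
    assume "card {(x, u) \<in> edges01 E L0. nbrs E u \<inter> layer2 E L0 \<noteq> {}} = 0"
    then show False using a by (simp add: alpha_def)
  qed
  then have "{(x, u) \<in> edges01 E L0. nbrs E u \<inter> layer2 E L0 \<noteq> {}} \<noteq> {}"
    by (cases "{(x, u) \<in> edges01 E L0. nbrs E u \<inter> layer2 E L0 \<noteq> {}} = {}") simp_all
  then obtain p where p: "p \<in> {(x, u) \<in> edges01 E L0. nbrs E u \<inter> layer2 E L0 \<noteq> {}}" by blast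
  obtain x u where pxu: "p = (x, u)" by (cases p)
  have xu: "(x, u) \<in> edges01 E L0" and nu: "nbrs E u \<inter> layer2 E L0 \<noteq> {}" using p unfolding pxu by simp_all
  from nu obtain v where v: "v \<in> nbrs E u" "v \<in> layer2 E L0" by blast
  let ?C = "comp_ge2 V E L0 v"
  let ?S = "{(x, y) \<in> E. x \<in> ?C \<and> y \<notin> ?C}"
  have vl: "v \<in> layer_ge2 V E L0" using layer2_sub[OF V(2)] v by blast
  have Cl: "?C \<subseteq> layer_ge2 V E L0" by (rule comp_layer[OF vl])
  have Ccomp: "?C \<in> components_ge2 V E L0" using vl by (simp add: components_ge2_def)
  have finS: "finite ?S" by (rule finite_subset[of _ E]) (auto intro: finite_subset[OF V(2)] simp: V(1))
  have u1: "u \<in> layer1 E L0" using xu by (simp add: edges01_def)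
  have "(u, v) \<in> E" using v by (simp add: nbrs_def)
  then have "(v, u) \<in> E" using sE by (simp add: sym_def)
  moreover have "u \<notin> ?C" using u1 Cl layer1_disj[of E L0 V] by blast
  ultimately have vuS: "(v, u) \<in> ?S" using comp_refl[of v V E L0] by simp
  have "?S \<noteq> {}" using vuS by (cases "?S = {}") simp_all
  then have "0 < card ?S" using finS by (simp add: card_gt_0_iff)
  then have "1 \<le> card ?S" by simp
  also have "\<dots> \<le> d * card ?C" using H Ccomp by blast
  finally show ?thesis by (cases d) auto
qed


lemma lossless_set_ne: "lossless_spmf p \<Longrightarrow> set_spmf p \<noteq> {}"
proof
  assume L: "lossless_spmf p" and e: "set_spmf p = {}"
  have "(\<integral>\<^sup>+x. 1 \<partial>measure_spmf p) = (\<integral>\<^sup>+x. 0 \<partial>measure_spmf p)"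
    by (rule nn_integral_cong_AE) (simp add: AE_measure_spmf_iff e)
  then show False using L by (simp add: measure_spmf.emeasure_eq_measure weight_spmf_def[symmetric] lossless_spmf_def)
qed

lemma nn_le_const_pmf: "(\<And>x. f x \<le> B) \<Longrightarrow> (\<integral>\<^sup>+x. f x \<partial>measure_pmf M) \<le> B"
proof -
  assume "\<And>x. f x \<le> B"
  then have "(\<integral>\<^sup>+x. f x \<partial>measure_pmf M) \<le> (\<integral>\<^sup>+x. B \<partial>measure_pmf M)" by (intro nn_integral_mono) auto
  also have "\<dots> = B" by (simp add: measure_pmf.emeasure_space_1)
  finally show ?thesis .
qed

lemma bind_le:
  "(\<And>x. (\<integral>\<^sup>+y. h y \<partial>measure_spmf (f x)) \<le> B) \<Longrightarrow> (\<integral>\<^sup>+y. h y \<partial>measure_spmf (bind_spmf (spmf_of_pmf M) f)) \<le> B"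
  unfolding nn_bind_spmf measure_spmf_spmf_of_pmf by (rule nn_le_const_pmf)

lemma sample_bound:
  assumes L: "lossless_spmf (reach_reject V E L0 rs0 0)"
    and B: "(\<integral>\<^sup>+x. ennreal (real (snd x)) \<partial>measure_spmf (reach_reject V E L0 rs0 0)) \<le> B"
  shows "lossless_spmf (sample V E L0 lbar rs0) \<and> expected_queries (sample V E L0 lbar rs0) \<le> B"
proof
  show "lossless_spmf (sample V E L0 lbar rs0)"
    using L by (simp add: sample_def Let_def)
  have z: "(\<integral>\<^sup>+x. ennreal (real (snd x)) \<partial>measure_spmf (map_spmf (\<lambda>x. (x, 0::nat)) (spmf_of_pmf P))) = 0" for P :: "nat pmf"
    by (simp add: nn_integral_map_spmf o_def)
  show "expected_queries (sample V E L0 lbar rs0) \<le> B"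
    unfolding expected_queries_def sample_def Let_def
    apply (rule bind_le)
    subgoal for b0
      apply (cases b0)
       apply (simp only: if_True z zero_le)
      apply (simp only: if_False)
      apply (rule bind_le)
      subgoal for b1 by (cases b1) (simp_all only: if_True if_False z B zero_le)
      done
    done
qed

theorem theorem3p2:
  shows "\<exists>K::real. \<forall>V E L0 (lbar::real) (rs0::real) (c::real) (d::nat).
    finite V \<and> E \<subseteq> V \<times> V \<and> sym E \<and> L0 \<subseteq> V \<and> lbar \<ge> 0
    \<and> c > 1
    \<and> (\<forall>v\<in>layer2 E L0. rs0 \<le> rs V E L0 v \<and> rs V E L0 v \<le> c * rs0)
    \<and> alpha E L0 > 0
    \<and> (\<forall>C\<in>components_ge2 V E L0. card {(x, y) \<in> E. x \<in> C \<and> y \<notin> C} \<le> d * card C)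
    \<longrightarrow> lossless_spmf (sample V E L0 lbar rs0)
      \<and> expected_queries (sample V E L0 lbar rs0)
          \<le> ennreal (K * (c * (1 / alpha E L0 + w_param V E L0 * real d)))"
proof (intro exI[of _ 2] allI impI)
  fix V E L0 and lbar rs0 c :: real and d :: nat
  assume hyp: "finite V \<and> E \<subseteq> V \<times> V \<and> sym E \<and> L0 \<subseteq> V \<and> lbar \<ge> 0
    \<and> c > 1
    \<and> (\<forall>v\<in>layer2 E L0. rs0 \<le> rs V E L0 v \<and> rs V E L0 v \<le> c * rs0)
    \<and> alpha E L0 > 0
    \<and> (\<forall>C\<in>components_ge2 V E L0. card {(x, y) \<in> E. x \<in> C \<and> y \<notin> C} \<le> d * card C)"
  have fV: "finite V" using hyp by (elim conjE)
  have EV: "E \<subseteq> V \<times> V" using hyp by (elim conjE)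
  have sE: "sym E" using hyp by (elim conjE)
  have c1: "c > 1" using hyp by (elim conjE)
  have Hrs: "\<forall>v\<in>layer2 E L0. rs0 \<le> rs V E L0 v \<and> rs V E L0 v \<le> c * rs0" using hyp by (elim conjE)
  have a: "alpha E L0 > 0" using hyp by (elim conjE)
  have H: "\<forall>C\<in>components_ge2 V E L0. card {(x, y) \<in> E. x \<in> C \<and> y \<notin> C} \<le> d * card C" using hyp by (elim conjE)
  let ?A = "attempt V E L0"
  let ?R = "reach V E L0 0"
  have ne: "edges01 E L0 \<noteq> {}"
  proof
    assume "edges01 E L0 = {}"
    then have "alpha E L0 = 0" by (simp add: alpha_def)
    with a show False by simp
  qed
  have succ: "measure_pmf.prob ?A {d. fst d \<noteq> None} = alpha E L0" by (rule attempt_success[OF fV EV ne])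
  have a1: "alpha E L0 \<le> 1" using measure_pmf.prob_le_1[of ?A "{d. fst d \<noteq> None}"] unfolding succ .
  have LR: "lossless_spmf (reach V E L0 acc)" for acc using reach_lossless[of V E L0 acc] a succ by simp
  have d1: "1 \<le> d" by (rule d_pos[OF fV EV sE a H])
  have dplus_pos: "0 < dplus E L0" using ne edges01_finite[OF fV EV] by (simp add: dplus_def card_gt_0_iff)
  have goodR: "0 < rs V E L0 (fst x) \<and> rs V E L0 (fst x) \<le> c * rs0" if x: "x \<in> set_spmf ?R" for x
  proof -
    obtain q where wq: "(Some (fst x), q) \<in> set_pmf ?A" using reach_support[OF x] by blast
    obtain v where v: "v \<in> layer2 E L0" and eq: "comp_ge2 V E L0 (fst x) = comp_ge2 V E L0 v"
      using good_facts[OF fV EV ne sE wq H] by blast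
    have "rs V E L0 (fst x) = rs V E L0 v" by (rule rs_comp[OF fV EV ne sE eq])
    moreover have "rs V E L0 v \<le> c * rs0" using Hrs v by blast
    moreover have "Some (fst x) \<in> set_pmf (map_pmf fst ?A)"
      unfolding set_map_pmf by (rule image_eqI[OF _ wq]) simp
    then have "pmf (map_pmf fst ?A) (Some (fst x)) > 0" by (simp add: pmf_positive)
    then have "0 < rs V E L0 (fst x)" using dplus_pos by (simp add: rs_def)
    ultimately show ?thesis by simp
  qed
  obtain x0 where x0: "x0 \<in> set_spmf ?R" using lossless_set_ne[OF LR[of 0]] by blast
  have rs0pos: "0 < rs0"
  proof -
    have "0 < c * rs0" using goodR[OF x0] by linarith
    then show ?thesis using c1 by (simp add: zero_less_mult_iff)
  qed
  have pbound: "1/c \<le> min 1 (rs0 / rs V E L0 (fst x))" if x: "x \<in> set_spmf ?R" for x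
  proof -
    have r: "0 < rs V E L0 (fst x)" "rs V E L0 (fst x) \<le> c * rs0" using goodR[OF x] by auto
    have "1/c \<le> rs0 / rs V E L0 (fst x)" using r c1 by (simp add: divide_simps mult.commute)
    moreover have "1/c \<le> 1" using c1 by simp
    ultimately show ?thesis by simp
  qed
  define \<alpha> where "\<alpha> = alpha E L0"
  define \<beta> where "\<beta> = 1/\<alpha> - 1"
  have \<beta>0: "0 \<le> \<beta>" using a a1 by (simp add: \<beta>_def \<alpha>_def field_simps)
  define W where "W = w_param V E L0"
  have Wint: "W = (\<integral>x. real (card (comp_ge2 V E L0 (fst x))) \<partial>measure_spmf ?R)"
    unfolding W_def w_param_def measure_map_spmf_conv_distr by (subst integral_distr) auto
  have W0: "0 \<le> W" unfolding Wint by (simp add: Bochner_Integration.integral_nonneg)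
  define Q where "Q = \<beta> + 1 + (1 + real d) * W"
  have Q0: "0 \<le> Q" using \<beta>0 W0 by (simp add: Q_def)
  have sp1: "emeasure (measure_spmf ?R) (space (measure_spmf ?R)) = 1"
    using LR[of 0] by (simp add: measure_spmf.emeasure_eq_measure weight_spmf_def[symmetric] lossless_spmf_def)
  have HN: "q \<le> 1" if rq: "(r, q) \<in> set_pmf ?A" and rN: "r = None" for r q
    using attempt_set[OF fV EV ne rq] rN by (elim disjE exE conjE) simp_all
  have HS: "ennreal (real q) \<le> ennreal (1 + (1 + real d) * real (card (comp_ge2 V E L0 w)))"
    if wq: "(Some w, q) \<in> set_pmf ?A" for w q
  proof -
    obtain v where "q \<le> 1 + (1 + d) * card (comp_ge2 V E L0 w)"
      using good_facts[OF fV EV ne sE wq H] by blast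
    then have "real q \<le> real (1 + (1 + d) * card (comp_ge2 V E L0 w))" by (simp only: of_nat_le_iff)
    then show ?thesis by (intro ennreal_leI) (simp add: algebra_simps)
  qed
  have Hs: "emeasure (measure_pmf ?A) {d. fst d = None} \<le> ennreal \<beta> * emeasure (measure_pmf ?A) {d. fst d \<noteq> None}"
  proof -
    have e: "measure_pmf.prob ?A (space (measure_pmf ?A) - {d. fst d \<noteq> None}) = 1 - \<alpha>"
      unfolding \<alpha>_def succ[symmetric] by (rule measure_pmf.prob_compl) simp
    moreover have "space (measure_pmf ?A) - {d. fst d \<noteq> None} = {d. fst d = None}" by auto
    ultimately have n: "emeasure (measure_pmf ?A) {d. fst d = None} = ennreal (1 - \<alpha>)"
      by (simp add: measure_pmf.emeasure_eq_measure)
    have sN: "emeasure (measure_pmf ?A) {d. fst d \<noteq> None} = ennreal \<alpha>"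
      by (simp only: measure_pmf.emeasure_eq_measure succ \<alpha>_def)
    have "\<beta> * \<alpha> = 1 - \<alpha>" using a by (simp add: \<beta>_def \<alpha>_def field_simps)
    then have "ennreal \<beta> * ennreal \<alpha> = ennreal (1 - \<alpha>)" using \<beta>0 a by (simp add: ennreal_mult[symmetric] \<alpha>_def)
    then show ?thesis using n sN by simp
  qed
  have bnd: "real (card (comp_ge2 V E L0 w)) \<le> real (card V) + 1" for w
  proof -
    have "real (card (comp_ge2 V E L0 w)) \<le> real (card V + 1)" by (rule of_nat_mono[OF comp_card[OF fV EV]])
    then show ?thesis by simp
  qed
  have intC: "integrable (measure_spmf ?R) (\<lambda>x. real (card (comp_ge2 V E L0 (fst x))))"
    by (rule measure_spmf.integrable_const_bound[where B="real (card V) + 1"]) (simp_all add: bnd)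
  have nnW: "(\<integral>\<^sup>+x. ennreal (real (card (comp_ge2 V E L0 (fst x)))) \<partial>measure_spmf ?R) = ennreal W"
    unfolding Wint by (rule nn_integral_eq_integral[OF intC]) simp
  have RC: "(\<integral>\<^sup>+x. ennreal (real (snd x)) \<partial>measure_spmf ?R) \<le> ennreal Q"
  proof -
    have "(\<integral>\<^sup>+x. ennreal (real (snd x)) \<partial>measure_spmf ?R)
      \<le> (\<integral>\<^sup>+x. (ennreal (real 0) + ennreal \<beta> + ennreal (1 + (1 + real d) * real (card (comp_ge2 V E L0 (fst x))))) \<partial>measure_spmf ?R)"
      using reach_cost[where g="\<lambda>w. ennreal (1 + (1 + real d) * real (card (comp_ge2 V E L0 w)))" and \<beta>="ennreal \<beta>", OF HN HS Hs, THEN spec[where x=0]]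
      by simp
    also have "\<dots> = (\<integral>\<^sup>+x. (ennreal (\<beta> + 1) + ennreal (1 + real d) * ennreal (real (card (comp_ge2 V E L0 (fst x))))) \<partial>measure_spmf ?R)"
      using \<beta>0 by (intro nn_integral_cong) (simp add: ennreal_plus[symmetric] ennreal_mult[symmetric] add.assoc del: ennreal_plus)
    also have "\<dots> = ennreal (\<beta> + 1) + ennreal (1 + real d) * ennreal W"
      by (subst nn_integral_add) (auto simp: nn_integral_cmult nnW sp1)
    also have "\<dots> = ennreal Q"
      using \<beta>0 W0 by (simp add: Q_def ennreal_plus[symmetric] ennreal_mult[symmetric] del: ennreal_plus)
    finally show ?thesis .
  qed
  have Hp: "ennreal (1/c) \<le> (\<integral>\<^sup>+x. ennreal (min 1 (rs0 / rs V E L0 (fst x))) \<partial>measure_spmf ?R)"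
  proof -
    have "ennreal (1/c) = (\<integral>\<^sup>+x. ennreal (1/c) \<partial>measure_spmf ?R)" by (simp add: sp1)
    also have "\<dots> \<le> (\<integral>\<^sup>+x. ennreal (min 1 (rs0 / rs V E L0 (fst x))) \<partial>measure_spmf ?R)"
      by (rule nn_integral_mono_AE) (auto simp: AE_measure_spmf_iff intro!: ennreal_leI pbound)
    finally show ?thesis .
  qed
  have rs00: "0 \<le> rs0" using rs0pos by simp
  have c0: "0 < c" using c1 by simp
  have RRC: "(\<integral>\<^sup>+x. ennreal (real (snd x)) \<partial>measure_spmf (reach_reject V E L0 rs0 0)) \<le> ennreal (c * Q)"
  proof -
    have "(\<integral>\<^sup>+x. ennreal (real (snd x)) \<partial>measure_spmf (reach_reject V E L0 rs0 0))
       \<le> (\<integral>\<^sup>+x. (ennreal (real 0) + ennreal (c * Q)) \<partial>measure_spmf (reach_reject V E L0 rs0 0))"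
      using rr_cost[OF rs00 RC Hp c0 Q0] by blast
    also have "\<dots> = ennreal (c * Q) * emeasure (measure_spmf (reach_reject V E L0 rs0 0)) (space (measure_spmf (reach_reject V E L0 rs0 0)))"
      by simp
    also have "\<dots> \<le> ennreal (c * Q) * 1"
      using measure_spmf.emeasure_space_le_1 by (intro mult_left_mono) auto
    finally show ?thesis by simp
  qed
  have RRL: "lossless_spmf (reach_reject V E L0 rs0 0)"
  proof (rule rr_lossless[OF rs00 _ LR[of 0]])
    show "1 \<le> c" using c1 by simp
    show "\<forall>x\<in>set_spmf (reach V E L0 0). 1 / c \<le> min 1 (rs0 / rs V E L0 (fst x))"
      using pbound by blast
  qed
  have SB: "lossless_spmf (sample V E L0 lbar rs0) \<and> expected_queries (sample V E L0 lbar rs0) \<le> ennreal (c * Q)"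
    by (rule sample_bound[OF RRL RRC])
  have fin: "c * Q \<le> 2 * (c * (1 / alpha E L0 + w_param V E L0 * real d))"
  proof -
    have h1: "W \<le> W * real d" using d1 W0 by (simp add: mult_le_cancel_left1)
    have h2: "0 \<le> 1 / alpha E L0" using a by simp
    have h3: "Q = 1 / alpha E L0 + W + W * real d" by (simp add: Q_def \<beta>_def \<alpha>_def algebra_simps)
    have "Q \<le> 2 * (1 / alpha E L0 + W * real d)"
    proof -
      have g: "\<And>x y. W \<le> y \<Longrightarrow> 0 \<le> x \<Longrightarrow> Q = x + W + y \<Longrightarrow> Q \<le> 2 * (x + y)" by (simp add: algebra_simps)
      show ?thesis by (rule g[OF h1 h2 h3])
    qed
    then show ?thesis using c0 by (simp add: W_def mult_left_mono)
  qed
  show "lossless_spmf (sample V E L0 lbar rs0) \<and> expected_queries (sample V E L0 lbar rs0)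
          \<le> ennreal (2 * (c * (1 / alpha E L0 + w_param V E L0 * real d)))"
    using SB fin by (meson ennreal_leI order_trans)
qed

end
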